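(* Let $R,V,q$ be as in the setting. Let $x,y\in V$ be $q$-minimal vectors with $y<x$ and $q(y)\cong_\nu q(x)$, and let $J=\operatorname{supp}(y)$. Then $q(y)\in\mathcal T$, $q(x)\in\mathcal G$, and one of the following holds: 1) $|\operatorname{supp}(y)|=|\operatorname{supp}(x)|=1$ and $x=ey$; 2) $|\operatorname{supp}(y)|=|\operatorname{supp}(x)|=2$ and $y<x<ey$; 3) $|\operatorname{supp}(y)|=1$, $|\operatorname{supp}(x)|\ge2$ and $y=x(J)$; 4) $|\operatorname{supp}(y)|=2$, $|\operatorname{supp}(x)|\ge3$ and $y=x(J)$.
   Context: All semirings are commutative with $1$. A semiring $R$ is supertropical if $e:=1+1$ satisfies $e+e=e$ and, for all $x,y\in R$: if $ex\neq ey$ then $x+y\in\{x,y\}$, and if $ex=ey$ then $x+y=ey$. Write $x\cong_\nu y$ for $ex=ey$. $\mathcal T=R\setminus eR$, $\mathcal G=eR\setminus\{0\}$. Setting: $R$ is supertropical with $e\mathcal T=\mathcal G$, $\mathcal T\cdot\mathcal T\subseteq\mathcal T$, $\mathcal G$ cancellative under multiplication; $V$ is a free $R$-module with base $(\varepsilon_i\mid i\in I)$; $q:V\to R$ is a quadratic form (i.e. $q(ax)=a^2q(x)$ and $q(x+y)=q(x)+q(y)+b(x,y)$ for some symmetric bilinear $b$). For $x=\sum_ix_i\varepsilon_i$ and $S\subseteq I$, $x(S)=\sum_{i\in S}x_i\varepsilon_i$, $\operatorname{supp}(x)=\{i:x_i\neq0\}$. Minimal ordering: $x\le y\iff\exists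 z:\ x+z=y$; $x<y$ means $x\le y$, $x\ne y$. $x$ is $q$-minimal if no $x'<x$ has $q(x')=q(x)$. *)

theory Defs
  imports Main
begin

definition st_e :: "'a::comm_semiring_1" where
  "st_e = 1 + 1"

definition supertropical :: "'a::comm_semiring_1 itself \<Rightarrow> bool" where
  "supertropical (TYPE('a)) \<longleftrightarrow>
     (st_e::'a) + st_e = st_e \<and>
     (\<forall>x y :: 'a. (st_e * x \<noteq> st_e * y \<longrightarrow> x + y \<in> {x, y}) \<and>
                  (st_e * x = st_e * y \<longrightarrow> x + y = st_e * y))"

definition nu_equiv :: "'a::comm_semiring_1 \<Rightarrow> 'a \<Rightarrow> bool" (infix "\<cong>\<^sub>\<nu>" 50) where
  "x \<cong>\<^sub>\<nu> y \<longleftrightarrow> st_e * x = st_e * y"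

definition ghostR :: "'a::comm_semiring_1 set" where
  "ghostR = {z. \<exists>y. z = st_e * y}"

definition tangT :: "'a::comm_semiring_1 set" where
  "tangT = UNIV - ghostR"

definition ghostG :: "'a::comm_semiring_1 set" where
  "ghostG = ghostR - {0}"

definition setting_R :: "'a::comm_semiring_1 itself \<Rightarrow> bool" where
  "setting_R (TYPE('a)) \<longleftrightarrow>
     supertropical TYPE('a) \<and>
     (\<lambda>x. st_e * x) ` (tangT::'a set) = ghostG \<and>
     (\<forall>x\<in>(tangT::'a set). \<forall>y\<in>tangT. x * y \<in> tangT) \<and>
     (\<forall>a\<in>(ghostG::'a set). \<forall>b\<in>ghostG. \<forall>c\<in>ghostG. a * c = b * c \<longrightarrow> a = b)"

(* The free module V with base indexed by 'i: finitely supported functions 'i \<Rightarrow> R,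
   with pointwise addition and scalar multiplication; \<epsilon>_i is the indicator of i. *)
definition supp :: "('i \<Rightarrow> 'a::zero) \<Rightarrow> 'i set" where
  "supp x = {i. x i \<noteq> 0}"

definition freeV :: "('i \<Rightarrow> 'a::zero) set" where
  "freeV = {x. finite (supp x)}"

definition vadd :: "('i \<Rightarrow> 'a::plus) \<Rightarrow> ('i \<Rightarrow> 'a) \<Rightarrow> 'i \<Rightarrow> 'a" where
  "vadd x y = (\<lambda>i. x i + y i)"

definition smult :: "'a::times \<Rightarrow> ('i \<Rightarrow> 'a) \<Rightarrow> 'i \<Rightarrow> 'a" where
  "smult a x = (\<lambda>i. a * x i)"

definition restr :: "('i \<Rightarrow> 'a::zero) \<Rightarrow> 'i set \<Rightarrow> 'i \<Rightarrow> 'a" where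
  "restr x S = (\<lambda>i. if i \<in> S then x i else 0)"

definition symm_bilinear :: "(('i \<Rightarrow> 'a::comm_semiring_1) \<Rightarrow> ('i \<Rightarrow> 'a) \<Rightarrow> 'a) \<Rightarrow> bool" where
  "symm_bilinear b \<longleftrightarrow>
     (\<forall>x\<in>freeV. \<forall>y\<in>freeV. b x y = b y x) \<and>
     (\<forall>x\<in>freeV. \<forall>y\<in>freeV. \<forall>z\<in>freeV. b (vadd x y) z = b x z + b y z) \<and>
     (\<forall>a. \<forall>x\<in>freeV. \<forall>y\<in>freeV. b (smult a x) y = a * b x y)"

definition quadratic_form :: "(('i \<Rightarrow> 'a::comm_semiring_1) \<Rightarrow> 'a) \<Rightarrow> bool" where
  "quadratic_form q \<longleftrightarrow>
     (\<forall>a. \<forall>x\<in>freeV. q (smult a x) = a^2 * q x) \<and>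
     (\<exists>b. symm_bilinear b \<and> (\<forall>x\<in>freeV. \<forall>y\<in>freeV. q (vadd x y) = q x + q y + b x y))"

definition mle :: "('i \<Rightarrow> 'a::comm_semiring_1) \<Rightarrow> ('i \<Rightarrow> 'a) \<Rightarrow> bool" where
  "mle x y \<longleftrightarrow> (\<exists>z\<in>freeV. vadd x z = y)"

definition mless :: "('i \<Rightarrow> 'a::comm_semiring_1) \<Rightarrow> ('i \<Rightarrow> 'a) \<Rightarrow> bool" where
  "mless x y \<longleftrightarrow> mle x y \<and> x \<noteq> y"

definition q_minimal :: "(('i \<Rightarrow> 'a::comm_semiring_1) \<Rightarrow> 'a) \<Rightarrow> ('i \<Rightarrow> 'a) \<Rightarrow> bool" where
  "q_minimal q x \<longleftrightarrow> x \<in> freeV \<and> \<not> (\<exists>x'\<in>freeV. mless x' x \<and> q x' = q x)"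

end

theory Submission
  imports Defs
begin

context
  assumes S: "supertropical TYPE('a::comm_semiring_1)"
begin

lemma ee: "(st_e::'a) * st_e = st_e"
proof -
  have "(st_e::'a) * st_e = st_e + st_e"
    by (subst (2) st_e_def) (simp only: distrib_left mult_1_right)
  also have "\<dots> = st_e" using S by (simp add: supertropical_def)
  finally show ?thesis .
qed

lemma st_all: "\<forall>x y :: 'a. (st_e * x \<noteq> st_e * y \<longrightarrow> x + y \<in> {x, y}) \<and>
                  (st_e * x = st_e * y \<longrightarrow> x + y = st_e * y)"
  using S unfolding supertropical_def by (rule conjunct2)

lemma st_neq: "st_e * (a::'a) \<noteq> st_e * b \<Longrightarrow> a + b = a \<or> a + b = b"
proof -
  assume h: "st_e * (a::'a) \<noteq> st_e * b"
  have "st_e * a \<noteq> st_e * b \<longrightarrow> a + b \<in> {a, b}" using st_all[rule_format, of a b] by (rule conjunct1)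
  with h show ?thesis by simp
qed

lemma st_eq: "st_e * (a::'a) = st_e * b \<Longrightarrow> a + b = st_e * b"
proof -
  assume h: "st_e * (a::'a) = st_e * b"
  have "st_e * a = st_e * b \<longrightarrow> a + b = st_e * b" using st_all[rule_format, of a b] by (rule conjunct2)
  with h show ?thesis by simp
qed

lemma eeN: "st_e * (st_e * (a::'a)) = st_e * a"
proof -
  have "st_e * (st_e * (a::'a)) = (st_e * st_e) * a" by (rule mult.assoc[symmetric])
  also have "\<dots> = st_e * a" by (simp only: ee)
  finally show ?thesis .
qed

lemma N0: "st_e * (a::'a) = 0 \<Longrightarrow> a = 0"
proof -
  assume h: "st_e * (a::'a) = 0"
  then have "st_e * a = st_e * 0" by simp
  then have "a + 0 = st_e * 0" by (rule st_eq)
  then show "a = 0" by simp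
qed

lemma Nidem: "st_e * (a::'a) + st_e * a = st_e * a"
proof -
  have "st_e * a + st_e * a = st_e * (st_e * a)" by (rule st_eq) (rule refl)
  then show ?thesis by (simp only: eeN)
qed

lemma ghost_iff: "(a::'a) \<in> ghostR \<longleftrightarrow> st_e * a = a"
proof
  assume "a \<in> ghostR"
  then obtain y where "a = st_e * y" unfolding ghostR_def by blast
  then show "st_e * a = a" using eeN[of y] by simp
next
  assume "st_e * a = a"
  then have "a = st_e * a" by simp
  then show "a \<in> ghostR" unfolding ghostR_def mem_Collect_eq by (rule exI)
qed

lemma N_ghost: "st_e * (a::'a) \<in> ghostR"
  unfolding ghostR_def mem_Collect_eq by (rule exI) (rule refl)

definition nle :: "'a \<Rightarrow> 'a \<Rightarrow> bool" where
  "nle a b \<longleftrightarrow> st_e * a + st_e * b = st_e * b"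

definition nlt :: "'a \<Rightarrow> 'a \<Rightarrow> bool" where
  "nlt a b \<longleftrightarrow> nle a b \<and> st_e * a \<noteq> st_e * b"

lemma nle_refl: "nle a a" by (simp add: nle_def Nidem)

lemma nle_total: "nle a b \<or> nle b a"
proof (cases "st_e * (st_e * a) = st_e * (st_e * b)")
  case True
  then show ?thesis using eeN by (simp add: nle_def Nidem)
next
  case False
  then have "st_e * a + st_e * b = st_e * a \<or> st_e * a + st_e * b = st_e * b"
    by (rule st_neq)
  then show ?thesis unfolding nle_def by (metis add.commute)
qed

lemma nle_trans: "nle a b \<Longrightarrow> nle b c \<Longrightarrow> nle a c"
  unfolding nle_def by (metis add.assoc)

lemma nle_antisym: "nle a b \<Longrightarrow> nle b a \<Longrightarrow> st_e * a = st_e * b"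
  unfolding nle_def by (metis add.commute)

lemma nle_add1: "nle a (a + b)"
  unfolding nle_def by (simp add: distrib_left add.assoc[symmetric] Nidem)

lemma nle_add2: "nle b (a + b)"
  using nle_add1[of b a] by (simp add: add.commute)

lemma nle_mult: "nle a b \<Longrightarrow> nle (a * c) (b * c)"
  unfolding nle_def by (metis distrib_right mult.assoc)

lemma nle_N: "st_e * a = st_e * a' \<Longrightarrow> st_e * b = st_e * b' \<Longrightarrow> nle a b \<longleftrightarrow> nle a' b'"
  unfolding nle_def by simp

lemma nlt_N: "st_e * a = st_e * a' \<Longrightarrow> st_e * b = st_e * b' \<Longrightarrow> nlt a b \<longleftrightarrow> nlt a' b'"
  unfolding nlt_def nle_def by simp

lemma nle_eqN: "st_e * a = st_e * b \<Longrightarrow> nle a b"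
  unfolding nle_def by (simp add: Nidem)

lemma nle_nlt_trans: "nle a b \<Longrightarrow> nlt b c \<Longrightarrow> nlt a c"
proof -
  assume ab: "nle a b" and bc: "nlt b c"
  then have bc1: "nle b c" and bc2: "st_e * b \<noteq> st_e * c" unfolding nlt_def by auto
  have ac: "nle a c" using nle_trans[OF ab bc1] .
  have "st_e * a \<noteq> st_e * c"
  proof
    assume "st_e * a = st_e * c"
    then have "nle c a" by (intro nle_eqN) (rule sym)
    then have "nle c b" using ab by (rule nle_trans)
    then have "st_e * b = st_e * c" using bc1 by (intro nle_antisym)
    with bc2 show False by contradiction
  qed
  with ac show ?thesis unfolding nlt_def by (intro conjI)
qed

lemma dom: "nlt a u \<Longrightarrow> u + a = u"
proof -
  assume "nlt a u"
  then have h: "nle a u" "st_e * u \<noteq> st_e * a" unfolding nlt_def by auto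
  from st_neq[OF h(2)] have "u + a = u \<or> u + a = a" .
  moreover have "u + a = a \<Longrightarrow> False"
  proof -
    assume "u + a = a"
    then have "st_e * (u + a) = st_e * a" by simp
    then have "st_e * u + st_e * a = st_e * a" by (simp only: distrib_left)
    then have "nle u a" by (simp only: nle_def)
    then have "st_e * u = st_e * a" using h(1) by (intro nle_antisym)
    with h(2) show False by contradiction
  qed
  ultimately show ?thesis by blast
qed

lemma split: "a + b \<notin> ghostR \<Longrightarrow> (a + b = a \<and> nlt b a) \<or> (a + b = b \<and> nlt a b)"
proof -
  assume ng: "a + b \<notin> ghostR"
  have ne: "st_e * a \<noteq> st_e * b"
  proof
    assume "st_e * a = st_e * b"
    then have "a + b = st_e * b" by (rule st_eq)
    then show False using ng N_ghost by simp
  qed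
  from st_neq[OF ne] show ?thesis
  proof
    assume h: "a + b = a"
    then have "nle b a" using nle_add2[of b a] by simp
    then show ?thesis using h ne unfolding nlt_def by auto
  next
    assume h: "a + b = b"
    then have "nle a b" using nle_add1[of a b] by simp
    then show ?thesis using h ne unfolding nlt_def by auto
  qed
qed

lemma sum_nonghost: "finite A \<Longrightarrow> sum f A \<notin> (ghostR::'a set) \<Longrightarrow> \<exists>i\<in>A. f i = sum f A"
proof (induction A rule: finite_induct)
  case empty
  then show ?case using N_ghost[of 0] by simp
next
  case (insert k A)
  then have s: "sum f (insert k A) = f k + sum f A" by simp
  with insert split[of "f k" "sum f A"] show ?case by auto
qed

lemma add_eqN: "st_e * (a::'a) = st_e * b \<Longrightarrow> a + st_e * b = st_e * b"
  using st_eq[of a "st_e * b"] eeN by simp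

lemma eqN_cases: "st_e * (a + z) = st_e * (a::'a) \<Longrightarrow> a + z = a \<or> a + z = st_e * a"
proof (cases "st_e * a = st_e * z")
  case True
  then show ?thesis using st_eq by (metis)
next
  case False
  assume h: "st_e * (a + z) = st_e * (a::'a)"
  from st_neq[OF False] show ?thesis
  proof
    assume "a + z = z" then show ?thesis using h False by simp
  qed simp
qed



lemma ncancel:
  assumes R: "setting_R TYPE('a::comm_semiring_1)"
    and h: "st_e * ((a::'a) * w) = st_e * (b * w)" and a0: "a \<noteq> 0" and b0: "b \<noteq> 0"
    and w0: "w \<noteq> 0"
  shows "st_e * a = st_e * b"
proof -
  have S: "supertropical TYPE('a)" using R unfolding setting_R_def by (rule conjunct1)
  have C: "\<forall>a\<in>(ghostG::'a set). \<forall>b\<in>ghostG. \<forall>c\<in>ghostG. a * c = b * c \<longrightarrow> a = b"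
    using R unfolding setting_R_def by (elim conjE)
  have G: "st_e * u \<in> (ghostG::'a set)" if "u \<noteq> 0" for u :: 'a
  proof -
    have "st_e * u \<noteq> 0" using N0[of u] that by auto
    then show ?thesis unfolding ghostG_def using N_ghost by simp
  qed
  have e1: "(st_e * a) * (st_e * w) = st_e * (a * w)"
    by (simp only: mult.assoc mult.left_commute[of a] eeN)
  have e2: "(st_e * b) * (st_e * w) = st_e * (b * w)"
    by (simp only: mult.assoc mult.left_commute[of b] eeN)
  have "(st_e * a) * (st_e * w) = (st_e * b) * (st_e * w)" using e1 e2 h by simp
  then show ?thesis using C[rule_format, OF G[OF a0] G[OF b0] G[OF w0]] by simp
qed

definition dlt :: "'i \<Rightarrow> 'i \<Rightarrow> 'a::comm_semiring_1" where
  "dlt i = (\<lambda>k. if k = i then 1 else 0)"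

lemma supp_restr:
  fixes v :: "'i \<Rightarrow> 'a::comm_semiring_1"
  shows "supp (restr v S) \<subseteq> S"
  unfolding supp_def restr_def by auto

lemma supp_restr2:
  fixes v :: "'i \<Rightarrow> 'a::comm_semiring_1"
  shows "supp (restr v S) \<subseteq> supp v"
  unfolding supp_def restr_def by auto

lemma freeV_restr_fin:
  fixes v :: "'i \<Rightarrow> 'a::comm_semiring_1"
  assumes "finite S"
  shows "restr v S \<in> freeV"
  unfolding freeV_def mem_Collect_eq by (rule finite_subset[OF supp_restr]) (rule assms)

lemma freeV_restr:
  fixes v :: "'i \<Rightarrow> 'a::comm_semiring_1"
  assumes "v \<in> freeV"
  shows "restr v S \<in> freeV"
  using assms unfolding freeV_def mem_Collect_eq by (rule finite_subset[OF supp_restr2, rotated])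

lemma freeV_vadd:
  fixes u :: "'i \<Rightarrow> 'a::comm_semiring_1"
  shows "u \<in> freeV \<Longrightarrow> w \<in> freeV \<Longrightarrow> vadd u w \<in> freeV"
proof -
  assume "u \<in> freeV" "w \<in> freeV"
  moreover have "supp (vadd u w) \<subseteq> supp u \<union> supp w"
    unfolding supp_def vadd_def by auto
  ultimately show ?thesis unfolding freeV_def by (simp add: finite_subset)
qed

lemma freeV_smult:
  fixes u :: "'i \<Rightarrow> 'a::comm_semiring_1"
  shows "u \<in> freeV \<Longrightarrow> smult a u \<in> freeV"
proof -
  assume "u \<in> freeV"
  moreover have "supp (smult a u) \<subseteq> supp u"
    unfolding supp_def smult_def by auto
  ultimately show ?thesis unfolding freeV_def by (simp add: finite_subset)
qed

lemma freeV_zero: "(\<lambda>_. 0::'a::comm_semiring_1) \<in> (freeV :: ('i \<Rightarrow> 'a) set)"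
  unfolding freeV_def supp_def by simp

lemma freeV_dlt: "(dlt i :: 'i \<Rightarrow> 'a::comm_semiring_1) \<in> freeV"
proof -
  have "supp (dlt i :: _ \<Rightarrow> 'a::comm_semiring_1) \<subseteq> {i}" unfolding supp_def dlt_def by auto
  then show ?thesis unfolding freeV_def by (simp add: finite_subset)
qed

lemma restr_empty:
  fixes v :: "'i \<Rightarrow> 'a::comm_semiring_1"
  shows "restr v {} = (\<lambda>_. 0)"
  unfolding restr_def by simp

lemma restr_split:
  fixes v :: "'i \<Rightarrow> 'a::comm_semiring_1"
  assumes "J \<subseteq> S"
  shows "restr v S = vadd (restr v J) (restr v (S - J))"
  using assms unfolding restr_def vadd_def by (auto intro!: ext)

lemma restr_all:
  fixes v :: "'i \<Rightarrow> 'a::comm_semiring_1"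
  assumes "supp v \<subseteq> S"
  shows "restr v S = v"
  using assms unfolding restr_def supp_def by (auto intro!: ext)

lemma restr_supp:
  fixes v :: "'i \<Rightarrow> 'a::comm_semiring_1"
  shows "restr v (supp v) = v"
  by (rule restr_all) simp

lemma restr_single:
  fixes v :: "'i \<Rightarrow> 'a::comm_semiring_1"
  shows "restr v {i} = smult (v i) (dlt i)"
  unfolding restr_def smult_def dlt_def by (rule ext) auto

lemma restr_insert:
  fixes v :: "'i \<Rightarrow> 'a::comm_semiring_1"
  assumes "k \<notin> S"
  shows "restr v (insert k S) = vadd (restr v S) (restr v {k})"
  using assms unfolding restr_def vadd_def by (auto intro!: ext)

lemma mle_restr:
  fixes v :: "'i \<Rightarrow> 'a::comm_semiring_1"
  assumes "v \<in> freeV"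
  shows "mle (restr v J) v"
proof -
  have v: "v \<in> freeV" by (rule assms)
  have "vadd (restr v J) (restr v (- J)) = v" unfolding restr_def vadd_def by (rule ext) auto
  moreover have "restr v (- J) \<in> freeV" using v by (rule freeV_restr)
  ultimately show ?thesis unfolding mle_def by (intro bexI)
qed

context
  fixes q :: "('i \<Rightarrow> 'a::comm_semiring_1) \<Rightarrow> 'a" and b
  assumes qs: "\<forall>a. \<forall>x\<in>freeV. q (smult a x) = a^2 * q x"
    and qa: "\<forall>x\<in>freeV. \<forall>y\<in>freeV. q (vadd x y) = q x + q y + b x y"
    and bb: "symm_bilinear b"
begin

lemma qsm: "x \<in> freeV \<Longrightarrow> q (smult a x) = a^2 * q x"
  using qs by simp

lemma qad: "x \<in> freeV \<Longrightarrow> y \<in> freeV \<Longrightarrow> q (vadd x y) = q x + q y + b x y"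
  using qa by simp

lemma bsym: "x \<in> freeV \<Longrightarrow> y \<in> freeV \<Longrightarrow> b x y = b y x"
  using bb unfolding symm_bilinear_def by simp

lemma badd: "x \<in> freeV \<Longrightarrow> y \<in> freeV \<Longrightarrow> z \<in> freeV \<Longrightarrow> b (vadd x y) z = b x z + b y z"
  using bb unfolding symm_bilinear_def by simp

lemma bsm: "x \<in> freeV \<Longrightarrow> y \<in> freeV \<Longrightarrow> b (smult a x) y = a * b x y"
  using bb unfolding symm_bilinear_def by simp

lemma bsm2: "x \<in> freeV \<Longrightarrow> y \<in> freeV \<Longrightarrow> b (smult a x) (smult c y) = a * c * b x y"
proof -
  assume x: "x \<in> freeV" and y: "y \<in> freeV"
  have "b (smult a x) (smult c y) = a * b x (smult c y)" using bsm[OF x freeV_smult[OF y]] .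
  also have "b x (smult c y) = b (smult c y) x" using bsym[OF x freeV_smult[OF y]] .
  also have "\<dots> = c * b y x" using bsm[OF y x] .
  also have "b y x = b x y" using bsym[OF y x] .
  finally show ?thesis by (simp add: mult.assoc)
qed

lemma zero_smult: "(\<lambda>_. 0) = smult 0 (\<lambda>_. (0::'a))"
  unfolding smult_def by simp

lemma smult_zero0: "smult 0 (\<lambda>_. 0) = (\<lambda>_. (0::'a))"
  unfolding smult_def by simp

lemma q_zero: "q (\<lambda>_. 0) = 0"
  using qsm[OF freeV_zero, of 0] by (simp add: smult_zero0)

lemma b_zero: "w \<in> freeV \<Longrightarrow> b (\<lambda>_. 0) w = 0"
  using bsm[OF freeV_zero, of w 0] by (simp add: smult_zero0)

lemma b_sum: "finite S \<Longrightarrow> w \<in> freeV \<Longrightarrow> b (restr v S) w = (\<Sum>i\<in>S. b (restr v {i}) w)"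
proof (induction S rule: finite_induct)
  case empty
  then show ?case using b_zero by (simp add: restr_empty)
next
  case (insert k S)
  have "b (restr v (insert k S)) w = b (vadd (restr v S) (restr v {k})) w"
    by (simp only: restr_insert[OF insert(2)])
  also have "\<dots> = b (restr v S) w + b (restr v {k}) w"
    using badd[OF freeV_restr_fin[OF insert(1)] freeV_restr_fin insert(4)] by simp
  finally show ?case using insert by (simp add: add.commute)
qed

lemma q_decomp: "u \<in> freeV \<Longrightarrow> z \<in> freeV \<Longrightarrow> q (vadd u z) = q u + (q z + b u z)"
  using qad by (simp add: add.assoc)

lemma q_single: "q (restr v {i}) = (v i)^2 * q (dlt i)"
  by (simp add: restr_single qsm[OF freeV_dlt])


lemma nle_restr:
  fixes v :: "'i \<Rightarrow> 'a"
  assumes J: "J \<subseteq> S" and fS: "finite S"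
  shows "nle (q (restr v J)) (q (restr v S))"
proof -
  have fJ: "finite J" using finite_subset[OF J fS] .
  have "q (restr v S) = q (vadd (restr v J) (restr v (S - J)))" using restr_split[OF J] by simp
  also have "\<dots> = q (restr v J) + (q (restr v (S - J)) + b (restr v J) (restr v (S - J)))"
    by (rule q_decomp[OF freeV_restr_fin[OF fJ] freeV_restr_fin]) (simp add: fS)
  finally show ?thesis by (simp only: nle_add1)
qed

lemma bprime:
  fixes v :: "'i \<Rightarrow> 'a"
  assumes "finite S"
  shows "q (restr v S) \<notin> ghostR \<Longrightarrow> \<exists>J\<subseteq>S. J \<noteq> {} \<and> card J \<le> 2 \<and> q (restr v J) = q (restr v S)"
  using assms
proof (induction S rule: finite_induct)
  case empty
  have "q (restr v {}) = st_e * 0" by (simp add: restr_empty q_zero)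
  then show ?case using empty N_ghost[of 0] by simp
next
  case (insert k S)
  define A where "A = q (restr v S)"
  define B where "B = q (restr v {k})"
  define C where "C = b (restr v S) (restr v {k})"
  have fS: "restr v S \<in> freeV" using insert(1) by (rule freeV_restr_fin)
  have fk: "restr v {k} \<in> freeV" by (rule freeV_restr_fin) simp
  have seq: "q (restr v (insert k S)) = A + B + C"
    unfolding A_def B_def C_def by (simp only: restr_insert[OF insert(2)] qad[OF fS fk])
  have ng: "A + B + C \<notin> ghostR" using insert(4) seq by simp
  from split[OF ng] show ?case
  proof
    assume h1: "A + B + C = A + B \<and> nlt C (A + B)"
    then have ng2: "A + B \<notin> ghostR" using ng by simp
    from split[OF ng2] show ?case
    proof
      assume h2: "A + B = A \<and> nlt B A"
      then have "A \<notin> ghostR" using ng2 by simp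
      then obtain J where J: "J \<subseteq> S" "J \<noteq> {}" "card J \<le> 2" "q (restr v J) = A"
        using insert(3) unfolding A_def by blast
      have "q (restr v J) = q (restr v (insert k S))" using J(4) seq h1 h2 by simp
      then show ?case using J(1,2,3) by blast
    next
      assume h2: "A + B = B \<and> nlt A B"
      have "q (restr v {k}) = q (restr v (insert k S))" using seq h1 h2 unfolding B_def by simp
      then show ?case by (intro exI[of _ "{k}"]) simp
    qed
  next
    assume h1: "A + B + C = C \<and> nlt (A + B) C"
    have Csum: "C = (\<Sum>i\<in>S. b (restr v {i}) (restr v {k}))"
      unfolding C_def using b_sum[OF insert(1) fk] .
    have "C \<notin> ghostR" using ng h1 by simp
    then obtain i where i: "i \<in> S" "b (restr v {i}) (restr v {k}) = C"
      using sum_nonghost[OF insert(1), of "\<lambda>i. b (restr v {i}) (restr v {k})"] Csum by auto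
    have ik: "i \<noteq> k" using i(1) insert(2) by blast
    have fi: "restr v {i} \<in> freeV" by (rule freeV_restr_fin) simp
    define Qi where "Qi = q (restr v {i})"
    have qik: "q (restr v (insert i {k})) = B + Qi + C"
    proof -
      have ik': "i \<notin> {k}" using ik by simp
      have "q (restr v (insert i {k})) = q (vadd (restr v {k}) (restr v {i}))"
        by (simp only: restr_insert[OF ik'])
      also have "\<dots> = B + Qi + b (restr v {k}) (restr v {i})"
        unfolding B_def Qi_def by (rule qad[OF fk fi])
      also have "b (restr v {k}) (restr v {i}) = C" using bsym[OF fk fi] i(2) by simp
      finally show ?thesis .
    qed
    have nB: "nlt B C" using nle_nlt_trans[OF nle_add2 conjunct2[OF h1]] .
    have nA: "nle Qi A" unfolding Qi_def A_def using i(1) insert(1) by (intro nle_restr) auto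
    have nQ: "nlt Qi C" using nle_nlt_trans[OF nle_trans[OF nA nle_add1] conjunct2[OF h1]] .
    have "B + Qi + C = C + B + Qi" by (simp add: ac_simps)
    also have "\<dots> = C" using dom[OF nB] dom[OF nQ] by simp
    finally have "q (restr v (insert i {k})) = q (restr v (insert k S))"
      using qik seq h1 by simp
    moreover have "insert i {k} \<subseteq> insert k S" using i(1) by blast
    moreover have "card (insert i {k}) \<le> 2" by (simp add: card_insert_if)
    ultimately show ?case by blast
  qed
qed


lemma eN_mult: "st_e * a = st_e * a' \<Longrightarrow> st_e * (a * c) = st_e * (a' * c)"
  by (simp only: mult.assoc[symmetric])

lemma supp_le:
  fixes y :: "'i \<Rightarrow> 'a"
  assumes h: "vadd y z = x"
  shows "supp y \<subseteq> supp x"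
proof
  fix k assume k: "k \<in> supp y"
  have xk: "x k = y k + z k" using h unfolding vadd_def by auto
  show "k \<in> supp x"
  proof (rule ccontr)
    assume "k \<notin> supp x"
    then have "x k = 0" unfolding supp_def by simp
    then have "nle (y k) 0" using nle_add1[of "y k" "z k"] xk by simp
    then have "st_e * y k = 0" unfolding nle_def by simp
    then have "y k = 0" by (rule N0)
    with k show False unfolding supp_def by simp
  qed
qed

lemma qpair:
  fixes v :: "'i \<Rightarrow> 'a"
  assumes ij: "i \<noteq> j"
  shows "q (restr v (insert i {j})) = (v j)^2 * q (dlt j) + (v i)^2 * q (dlt i) + v j * v i * b (dlt j) (dlt i)"
proof -
  have ij': "i \<notin> {j}" using ij by simp
  have "q (restr v (insert i {j})) = q (vadd (restr v {j}) (restr v {i}))"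
    by (simp only: restr_insert[OF ij'])
  also have "\<dots> = q (restr v {j}) + q (restr v {i}) + b (restr v {j}) (restr v {i})"
    by (rule qad) (rule freeV_restr_fin, simp)+
  also have "b (restr v {j}) (restr v {i}) = v j * v i * b (dlt j) (dlt i)"
    by (simp only: restr_single bsm2[OF freeV_dlt freeV_dlt])
  finally show ?thesis by (simp only: q_single)
qed

lemma q_nle_mle:
  assumes u: "u \<in> freeV" and m: "mle u v"
  shows "nle (q u) (q v)"
proof -
  obtain w where w: "w \<in> freeV" "vadd u w = v" using m unfolding mle_def by blast
  have "q v = q u + (q w + b u w)" using q_decomp[OF u w(1)] w(2) by simp
  then show ?thesis by (simp only: nle_add1)
qed


lemma main:
  fixes x y :: "'i \<Rightarrow> 'a"
  assumes R: "setting_R TYPE('a)"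
    and x: "x \<in> freeV" and y: "y \<in> freeV"
    and xmin: "q_minimal q x" and ymin: "q_minimal q y"
    and yx: "mless y x"
    and nu: "q y \<cong>\<^sub>\<nu> q x"
  shows "q y \<in> tangT \<and> q x \<in> ghostG \<and>
    ((card (supp y) = 1 \<and> card (supp x) = 1 \<and> x = smult st_e y) \<or>
     (card (supp y) = 2 \<and> card (supp x) = 2 \<and> mless y x \<and> mless x (smult st_e y)) \<or>
     (card (supp y) = 1 \<and> card (supp x) \<ge> 2 \<and> y = restr x (supp y)) \<or>
     (card (supp y) = 2 \<and> card (supp x) \<ge> 3 \<and> y = restr x (supp y)))"
proof -
  have xmin': "\<And>x'. x' \<in> freeV \<Longrightarrow> mless x' x \<Longrightarrow> q x' = q x \<Longrightarrow> False"
    using xmin unfolding q_minimal_def by blast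
  have ymin': "\<And>x'. x' \<in> freeV \<Longrightarrow> mless x' y \<Longrightarrow> q x' = q y \<Longrightarrow> False"
    using ymin unfolding q_minimal_def by blast
  obtain z where z: "z \<in> freeV" "vadd y z = x" using yx unfolding mless_def mle_def by blast
  have yne: "y \<noteq> x" using yx unfolding mless_def by blast
  define w where "w = q z + b y z"
  have qx: "q x = q y + w" unfolding w_def using q_decomp[OF y z(1)] z(2) by simp
  have nuE: "st_e * q y = st_e * q x" using nu unfolding nu_equiv_def .
  have notq: "q x \<noteq> q y" using xmin'[OF y yx] by metis
  have ew: "st_e * q y = st_e * w"
  proof (rule ccontr)
    assume ne: "st_e * q y \<noteq> st_e * w"
    from st_neq[OF ne] show False
    proof
      assume "q y + w = q y" then show False using qx notq by simp
    next
      assume "q y + w = w"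
      then have "st_e * q x = st_e * w" using qx by simp
      then show False using ne nuE by simp
    qed
  qed
  have qxe: "q x = st_e * q y" using st_eq[OF ew] qx ew by simp
  have qyT: "q y \<notin> ghostR"
  proof
    assume "q y \<in> ghostR"
    then have "st_e * q y = q y" using ghost_iff by blast
    then show False using qxe notq by simp
  qed
  have qy0: "q y \<noteq> 0" using qyT N_ghost[of 0] by auto
  have qxG: "q x \<in> ghostG"
  proof -
    have "q x \<noteq> 0" using qxe qy0 N0 by metis
    then show ?thesis unfolding ghostG_def using qxe N_ghost by simp
  qed
  have part1: "q y \<in> tangT \<and> q x \<in> ghostG" using qyT qxG unfolding tangT_def by simp
  define J where "J = supp y"
  have fJ: "finite J" using y unfolding J_def freeV_def by simp
  have fx: "finite (supp x)" using x unfolding freeV_def by simp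
  have yJ: "restr y J = y" unfolding J_def by (rule restr_supp)
  have propJ: "\<And>S. S \<subseteq> J \<Longrightarrow> S \<noteq> J \<Longrightarrow> q (restr y S) = q y \<Longrightarrow> False"
  proof -
    fix S assume SJ: "S \<subseteq> J" "S \<noteq> J" "q (restr y S) = q y"
    obtain k where k: "k \<in> J" "k \<notin> S" using SJ by blast
    have "restr y S k \<noteq> y k" using k unfolding restr_def J_def supp_def by simp
    then have "restr y S \<noteq> y" by metis
    then have "mless (restr y S) y" using mle_restr[OF y] unfolding mless_def by blast
    then show False using ymin'[OF freeV_restr[OF y]] SJ(3) by blast
  qed
  obtain J0 where J0: "J0 \<subseteq> J" "J0 \<noteq> {}" "card J0 \<le> 2" "q (restr y J0) = q (restr y J)"
    using bprime[OF fJ, of y] qyT yJ by auto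
  have J0J: "J0 = J" using propJ[OF J0(1)] J0(4) yJ by auto
  have Jne: "J \<noteq> {}" and Jc: "card J \<le> 2" using J0 J0J by auto
  have Jx: "J \<subseteq> supp x" unfolding J_def by (rule supp_le[OF z(2)])
  have comp: "\<And>k. x k = y k + z k" using z(2) unfolding vadd_def by (metis)
  have nlek: "\<And>k. nle (y k) (x k)" using comp nle_add1 by metis
  define X where "X = restr x J"
  have fX: "X \<in> freeV" unfolding X_def by (rule freeV_restr[OF x])
  have nXx: "nle (q X) (q x)" unfolding X_def by (rule q_nle_mle[OF freeV_restr[OF x] mle_restr[OF x]])
  have nxy: "nle (q x) (q y)" using nuE by (intro nle_eqN) simp
  have Xeq: "q X = q x \<Longrightarrow> X = x"
  proof (rule ccontr)
    assume "q X = q x" "X \<noteq> x"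
    then have "mless X x" unfolding X_def mless_def using mle_restr[OF x] by blast
    then show False using xmin'[OF fX] \<open>q X = q x\<close> by blast
  qed
  have yk0: "\<And>k. k \<notin> J \<Longrightarrow> y k = 0" unfolding J_def supp_def by simp
  have yk1: "\<And>k. k \<in> J \<Longrightarrow> y k \<noteq> 0" unfolding J_def supp_def by simp
  have xk1: "\<And>k. k \<in> J \<Longrightarrow> x k \<noteq> 0" using Jx unfolding supp_def by blast
  have cardJ: "card J = 1 \<or> card J = 2" using Jne Jc fJ by (cases "card J") (auto simp: card_eq_0_iff)
  have partA: "restr x J = y \<Longrightarrow> ?thesis"
  proof -
    assume rxy: "restr x J = y"
    have "supp x \<noteq> J"
    proof
      assume "supp x = J"
      then have "x = restr x J" using restr_supp[of x] by simp
      then show False using rxy yne by simp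
    qed
    then have "J \<subset> supp x" using Jx by blast
    then have "card J < card (supp x)" using fx by (rule psubset_card_mono[rotated])
    then show ?thesis using part1 cardJ rxy unfolding J_def by auto
  qed
  have xcases: "\<And>k. st_e * x k = st_e * y k \<Longrightarrow> x k = y k \<or> x k = st_e * y k"
  proof -
    fix k assume "st_e * x k = st_e * y k"
    then have "st_e * (y k + z k) = st_e * y k" using comp[of k] by simp
    from eqN_cases[OF this] show "x k = y k \<or> x k = st_e * y k" using comp[of k] by simp
  qed
  from cardJ show ?thesis
  proof
    assume c1: "card J = 1"
    then obtain j where Jj: "J = {j}" by (rule card_1_singletonE)
    define c where "c = q (dlt j)"
    define u where "u = y j * c"
    have qy_eq: "q y = y j * u"
    proof -
      have "q y = q (restr y {j})" using yJ Jj by simp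
      also have "\<dots> = (y j)^2 * c" unfolding c_def by (rule q_single)
      finally show ?thesis unfolding u_def by (simp add: power2_eq_square mult.assoc)
    qed
    have qX_eq: "q X = x j * (x j * c)"
    proof -
      have "q X = (x j)^2 * c" unfolding X_def Jj c_def by (rule q_single)
      then show ?thesis by (simp add: power2_eq_square mult.assoc)
    qed
    have n1: "nle (y j * u) (x j * u)" by (rule nle_mult[OF nlek])
    have n2': "nle (y j * (x j * c)) (x j * (x j * c))" by (rule nle_mult[OF nlek])
    have e2: "y j * (x j * c) = x j * u" unfolding u_def by (simp add: mult.left_commute)
    have n2: "nle (x j * u) (q X)" using n2' e2 qX_eq by simp
    have n3: "nle (q X) (y j * u)" using nle_trans[OF nXx nxy] qy_eq by simp
    have "st_e * (y j * u) = st_e * (x j * u)"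
      by (rule nle_antisym[OF n1 nle_trans[OF n2 n3]])
    moreover have "u \<noteq> 0" using qy0 qy_eq by auto
    ultimately have "st_e * y j = st_e * x j"
      using ncancel[OF R] yk1 xk1 Jj by blast
    then have xjc: "x j = y j \<or> x j = st_e * y j" using xcases[of j] by (simp only: eq_commute)
    show ?thesis
    proof (cases "x j = y j")
      case True
      have "restr x J = y" unfolding Jj restr_def using True yk0 Jj by (auto intro!: ext)
      then show ?thesis by (rule partA)
    next
      case False
      then have xj: "x j = st_e * y j" using xjc by simp
      have "q X = st_e * q y"
      proof -
        have "q X = (st_e * y j) * ((st_e * y j) * c)" using qX_eq xj by simp
        also have "\<dots> = (st_e * st_e) * (y j * u)" unfolding u_def by (simp add: ac_simps)
        finally show ?thesis using ee qy_eq by simp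
      qed
      then have "X = x" using Xeq qxe by simp
      then have xX: "x = restr x {j}" unfolding X_def Jj by simp
      have "x = smult st_e y"
      proof
        fix k show "x k = smult st_e y k"
        proof (cases "k = j")
          case True then show ?thesis using xj unfolding smult_def by simp
        next
          case False
          then have "x k = 0" using fun_cong[OF xX, of k] unfolding restr_def by simp
          moreover have "y k = 0" using yk0 False Jj by simp
          ultimately show ?thesis unfolding smult_def by simp
        qed
      qed
      moreover have "supp x = J"
      proof -
        have "supp x \<subseteq> J" using supp_restr[of x J] xX[symmetric] Jj by simp
        then show ?thesis using Jx by blast
      qed
      ultimately show ?thesis using part1 c1 unfolding J_def by simp
    qed
  next
    assume c2: "card J = 2"
    then obtain i j where Jij: "J = {i, j}" "i \<noteq> j" by (auto simp: card_2_iff)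
    have iJ: "i \<in> J" and jJ: "j \<in> J" using Jij by auto
    define ci where "ci = q (dlt i)"
    define cj where "cj = q (dlt j)"
    define c0 where "c0 = b (dlt j) (dlt i)"
    define Qi where "Qi = (y i)^2 * ci"
    define Qj where "Qj = (y j)^2 * cj"
    define B where "B = y j * y i * c0"
    define Xi where "Xi = (x i)^2 * ci"
    define Xj where "Xj = (x j)^2 * cj"
    define B' where "B' = x j * x i * c0"
    have qy_eq: "q y = Qj + Qi + B"
      using qpair[OF Jij(2), of y] yJ Jij(1) unfolding Qi_def Qj_def B_def ci_def cj_def c0_def by simp
    have qX_eq: "q X = Xj + Xi + B'"
      using qpair[OF Jij(2), of x] Jij(1) unfolding X_def Xi_def Xj_def B'_def ci_def cj_def c0_def by simp
    have qyng: "Qj + Qi + B \<notin> ghostR" using qyT qy_eq by simp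
    have domB: "Qj + Qi + B = B \<and> nlt (Qj + Qi) B"
    proof -
      have notQ: "\<And>k. k \<in> J \<Longrightarrow> (y k)^2 * q (dlt k) = q y \<Longrightarrow> False"
      proof -
        fix k assume k: "k \<in> J" "(y k)^2 * q (dlt k) = q y"
        have "q (restr y {k}) = q y" using k(2) by (simp only: q_single)
        moreover have "{k} \<noteq> J" using Jij k(1) by auto
        ultimately show False using propJ[of "{k}"] k(1) by blast
      qed
      from split[OF qyng] show ?thesis
      proof
        assume h: "Qj + Qi + B = Qj + Qi \<and> nlt B (Qj + Qi)"
        then have ng: "Qj + Qi \<notin> ghostR" using qyng by simp
        from split[OF ng] show ?thesis
        proof
          assume "Qj + Qi = Qj \<and> nlt Qi Qj"
          then have "Qj = q y" using h qy_eq by simp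
          then show ?thesis using notQ[OF jJ] unfolding Qj_def cj_def by blast
        next
          assume "Qj + Qi = Qi \<and> nlt Qj Qi"
          then have "Qi = q y" using h qy_eq by simp
          then show ?thesis using notQ[OF iJ] unfolding Qi_def ci_def by blast
        qed
      qed
    qed
    have qyB: "q y = B" using domB qy_eq by simp
    have nQj: "nlt Qj B" by (rule nle_nlt_trans[OF nle_add1 conjunct2[OF domB]])
    have nQi: "nlt Qi B" by (rule nle_nlt_trans[OF nle_add2 conjunct2[OF domB]])
    have B0: "B \<noteq> 0" using qy0 qyB by simp
    have BT: "B \<notin> ghostR" using qyT qyB by simp
    define M where "M = x j * (y i * c0)"
    have Bf: "B = y j * (y i * c0)" unfolding B_def by (simp add: mult.assoc)
    have B'f: "B' = x i * (x j * c0)" unfolding B'_def by (simp add: ac_simps)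
    have Mf: "M = y i * (x j * c0)" unfolding M_def by (simp add: ac_simps)
    have m1: "nle B M" unfolding Bf M_def by (rule nle_mult[OF nlek])
    have m2: "nle M B'" unfolding Mf B'f by (rule nle_mult[OF nlek])
    have m3a: "nle B' (q X)" using nle_add2[of B' "Xj + Xi"] qX_eq by simp
    have m3: "nle B' B" using nle_trans[OF nle_trans[OF m3a nXx] nxy] qyB by simp
    have eBM: "st_e * B = st_e * M" by (rule nle_antisym[OF m1 nle_trans[OF m2 m3]])
    have eMB': "st_e * M = st_e * B'" by (rule nle_antisym[OF m2 nle_trans[OF m3 m1]])
    have yic: "y i * c0 \<noteq> 0" using B0 Bf by auto
    have ejx: "st_e * y j = st_e * x j"
      using ncancel[OF R _ yk1[OF jJ] xk1[OF jJ] yic] eBM unfolding Bf M_def by simp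
    have xjc: "x j * c0 \<noteq> 0"
    proof
      assume "x j * c0 = 0"
      then have "B' = 0" using B'f by simp
      then have "st_e * B = 0" using eBM eMB' by simp
      then show False using B0 N0 by blast
    qed
    have eix: "st_e * y i = st_e * x i"
      using ncancel[OF R _ yk1[OF iJ] xk1[OF iJ] xjc] eMB' unfolding Mf B'f by simp
    have xjcase: "x j = y j \<or> x j = st_e * y j" using xcases[of j] ejx by (simp only: eq_commute)
    have xicase: "x i = y i \<or> x i = st_e * y i" using xcases[of i] eix by (simp only: eq_commute)
    show ?thesis
    proof (cases "x i = y i \<and> x j = y j")
      case True
      have "restr x J = y"
      proof
        fix k show "restr x J k = y k"
          using True yk0[of k] Jij(1) unfolding restr_def by auto
      qed
      then show ?thesis by (rule partA)
    next
      case False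
      have h2: "\<And>a b. a * (st_e * b) = st_e * (a * (b::'a))"
        by (rule mult.left_commute)
      have h3: "\<And>a b. (st_e * a) * (st_e * b) = st_e * (a * (b::'a))"
      proof -
        fix a b :: 'a
        have "(st_e * a) * (st_e * b) = st_e * (a * (st_e * b))" by (rule mult.assoc)
        also have "\<dots> = st_e * (st_e * (a * b))" by (rule arg_cong[where f="\<lambda>t. st_e * t"]) (rule h2)
        also have "\<dots> = st_e * (a * b)" by (rule eeN)
        finally show "(st_e * a) * (st_e * b) = st_e * (a * b)" .
      qed
      have xx: "x j * x i = st_e * (y j * y i)"
      proof -
        from xjcase show ?thesis
        proof
          assume xj: "x j = y j"
          then have xi: "x i = st_e * y i" using xicase False by blast
          show ?thesis unfolding xj xi by (rule h2)
        next
          assume xj: "x j = st_e * y j"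
          from xicase show ?thesis
          proof
            assume xi: "x i = y i"
            show ?thesis unfolding xj xi by (rule mult.assoc)
          next
            assume xi: "x i = st_e * y i"
            show ?thesis unfolding xj xi by (rule h3)
          qed
        qed
      qed
      have B'e: "B' = st_e * B" unfolding B'_def B_def using xx by (simp add: mult.assoc)
      have eB': "st_e * B' = st_e * B" using B'e eeN by simp
      have eXi: "st_e * Xi = st_e * Qi"
      proof -
        have "st_e * (x i * (x i * ci)) = st_e * (y i * (x i * ci))" using eN_mult[OF eix[symmetric]] .
        also have "y i * (x i * ci) = x i * (y i * ci)" by (simp add: mult.left_commute)
        also have "st_e * (x i * (y i * ci)) = st_e * (y i * (y i * ci))" using eN_mult[OF eix[symmetric]] .
        finally show ?thesis unfolding Xi_def Qi_def by (simp add: power2_eq_square mult.assoc)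
      qed
      have eXj: "st_e * Xj = st_e * Qj"
      proof -
        have "st_e * (x j * (x j * cj)) = st_e * (y j * (x j * cj))" using eN_mult[OF ejx[symmetric]] .
        also have "y j * (x j * cj) = x j * (y j * cj)" by (simp add: mult.left_commute)
        also have "st_e * (x j * (y j * cj)) = st_e * (y j * (y j * cj))" using eN_mult[OF ejx[symmetric]] .
        finally show ?thesis unfolding Xj_def Qj_def by (simp add: power2_eq_square mult.assoc)
      qed
      have nXi: "nlt Xi B'" using nlt_N[OF eXi eB'] nQi by simp
      have nXj: "nlt Xj B'" using nlt_N[OF eXj eB'] nQj by simp
      have "q X = B' + Xj + Xi" using qX_eq by (simp add: ac_simps)
      also have "\<dots> = B'" using dom[OF nXj] dom[OF nXi] by simp
      finally have "q X = q x" using B'e qxe qyB by simp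
      then have "X = x" by (rule Xeq)
      then have xX: "x = restr x J" unfolding X_def by simp
      have suppx: "supp x = J"
      proof -
        have "supp x \<subseteq> J" using supp_restr[of x J] xX[symmetric] by simp
        then show ?thesis using Jx by blast
      qed
      have allk: "\<And>k. st_e * x k = st_e * y k"
      proof -
        fix k show "st_e * x k = st_e * y k"
        proof (cases "k \<in> J")
          case True then show ?thesis using ejx eix Jij(1) by auto
        next
          case False
          then have "x k = 0" using fun_cong[OF xX, of k] unfolding restr_def by simp
          then show ?thesis using yk0[OF False] by simp
        qed
      qed
      have mle1: "mle x (smult st_e y)"
      proof -
        have "vadd x (smult st_e y) = smult st_e y"
          unfolding vadd_def smult_def using add_eqN[OF allk] by simp
        then show ?thesis unfolding mle_def using freeV_smult[OF y] by blast
      qed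
      have ne1: "x \<noteq> smult st_e y"
      proof
        assume xe: "x = smult st_e y"
        define y2 where "y2 = (\<lambda>k. if k = i then st_e * y k else y k)"
        define Y where "Y = restr y2 (insert i {j})"
        have fY: "Y \<in> freeV" unfolding Y_def by (rule freeV_restr_fin) simp
        have y2j: "y2 j = y j" and y2i: "y2 i = st_e * y i" using Jij(2) unfolding y2_def by auto
        have qY: "q Y = Qj + st_e * Qi + st_e * B"
        proof -
          have "q Y = (y2 j)^2 * cj + (y2 i)^2 * ci + y2 j * y2 i * c0"
            unfolding Y_def ci_def cj_def c0_def by (rule qpair[OF Jij(2)])
          also have "(y2 i)^2 * ci = st_e * Qi"
            unfolding y2i Qi_def power2_eq_square h3 by (rule mult.assoc)
          also have "y2 j * y2 i * c0 = st_e * B"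
            unfolding y2i y2j B_def h2 by (rule mult.assoc)
          finally show ?thesis unfolding y2j Qj_def by simp
        qed
        have eeB: "st_e * (st_e * B) = st_e * B" by (rule eeN)
        have n1: "nlt Qj (st_e * B)" using nlt_N[OF refl eeB[symmetric]] nQj by simp
        have n2: "nlt (st_e * Qi) (st_e * B)" using nlt_N[OF eeN[symmetric] eeB[symmetric]] nQi by simp
        have "q Y = st_e * B + Qj + st_e * Qi" using qY by (simp add: ac_simps)
        also have "\<dots> = st_e * B" using dom[OF n1] dom[OF n2] by simp
        finally have qYx: "q Y = q x" using qxe qyB by simp
        have eY: "\<And>k. st_e * Y k = st_e * y k"
        proof -
          fix k show "st_e * Y k = st_e * y k"
          proof (cases "k \<in> J")
            case True then show ?thesis using Jij unfolding Y_def y2_def restr_def by (auto simp: eeN)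
          next
            case False then show ?thesis using Jij yk0[OF False] unfolding Y_def y2_def restr_def by auto
          qed
        qed
        have "vadd Y x = x" unfolding xe vadd_def smult_def using add_eqN[OF eY] by simp
        then have mY: "mle Y x" unfolding mle_def using x by blast
        have yjne: "y j \<noteq> st_e * y j"
        proof
          assume a: "y j = st_e * y j"
          have "B = (st_e * y j) * y i * c0" unfolding B_def
            by (rule arg_cong[where f="\<lambda>t. t * y i * c0"]) (rule a)
          also have "\<dots> = st_e * B" unfolding B_def by (simp only: mult.assoc)
          finally have a2: "B = st_e * B" .
          have "st_e * B \<in> ghostR" by (rule N_ghost)
          then have "B \<in> ghostR" by (simp only: a2[symmetric])
          then show False using BT by contradiction
        qed
        have "Y j \<noteq> x j" using yjne xe y2j unfolding Y_def restr_def smult_def by simp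
        then have "Y \<noteq> x" by metis
        then show False using xmin'[OF fY] mY qYx unfolding mless_def by blast
      qed
      have "mless x (smult st_e y)" using mle1 ne1 unfolding mless_def by blast
      then show ?thesis using part1 c2 suppx yx unfolding J_def by simp
    qed
  qed
qed

end

end

theorem theorem7p6:
  fixes q :: "('i \<Rightarrow> 'a::comm_semiring_1) \<Rightarrow> 'a"
    and x y :: "'i \<Rightarrow> 'a"
  assumes R: "setting_R TYPE('a)"
    and Q: "quadratic_form q"
    and x: "x \<in> freeV" and y: "y \<in> freeV"
    and xmin: "q_minimal q x" and ymin: "q_minimal q y"
    and yx: "mless y x"
    and nu: "q y \<cong>\<^sub>\<nu> q x"
  shows "q y \<in> tangT \<and> q x \<in> ghostG \<and>
    ((card (supp y) = 1 \<and> card (supp x) = 1 \<and> x = smult st_e y) \<or>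
     (card (supp y) = 2 \<and> card (supp x) = 2 \<and> mless y x \<and> mless x (smult st_e y)) \<or>
     (card (supp y) = 1 \<and> card (supp x) \<ge> 2 \<and> y = restr x (supp y)) \<or>
     (card (supp y) = 2 \<and> card (supp x) \<ge> 3 \<and> y = restr x (supp y)))"
proof -
  have S: "supertropical TYPE('a)" using R unfolding setting_R_def by (rule conjunct1)
  have qs: "\<forall>a. \<forall>x\<in>freeV. q (smult a x) = a^2 * q x"
    using Q unfolding quadratic_form_def by (rule conjunct1)
  have "\<exists>b. symm_bilinear b \<and> (\<forall>x\<in>freeV. \<forall>y\<in>freeV. q (vadd x y) = q x + q y + b x y)"
    using Q unfolding quadratic_form_def by (rule conjunct2)
  then obtain b where bb: "symm_bilinear b"
    and qa: "\<forall>x\<in>freeV. \<forall>y\<in>freeV. q (vadd x y) = q x + q y + b x y" by blast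
  show ?thesis by (rule main[OF S qs qa bb R x y xmin ymin yx nu])
qed

end
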